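(* Let $(G,\varphi)$ be a complex unit gain graph, let $u$ be a cut vertex of $G$, and let $H$ be a connected component of $G-u$. If $r(H,\varphi)=r(H+u,\varphi)$, then $r(G,\varphi)=r(H,\varphi)+r(G-V(H),\varphi)$.
   Context: A complex unit gain graph $(G,\varphi)$ is a simple finite graph $G$ with a gain function $\varphi$ assigning to each oriented edge $e_{ij}$ a complex number of modulus $1$ with $\varphi(e_{ji})=\overline{\varphi(e_{ij})}$. Its adjacency matrix $A(G,\varphi)$ has $(i,j)$-entry $\varphi(e_{ij})$ if $v_i,v_j$ are adjacent and $0$ otherwise; $r(G,\varphi)$ is its rank. For an induced subgraph $K$ of $G$, $(K,\varphi)$ denotes $K$ with the restriction of $\varphi$. $H+u$ denotes the subgraph of $G$ induced by $V(H)\cup\{u\}$, and $G-V(H)$ is obtained from $G$ by deleting all vertices of $H$ (so it contains $u$). *)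

theory Defs
  imports Complex_Main "HOL-Library.Function_Algebras"
begin

definition simple_graph :: "'a set \<Rightarrow> ('a \<Rightarrow> 'a \<Rightarrow> bool) \<Rightarrow> bool" where
  "simple_graph V E \<longleftrightarrow> finite V \<and> (\<forall>x y. E x y \<longrightarrow> x \<in> V \<and> y \<in> V)
     \<and> (\<forall>x y. E x y \<longrightarrow> E y x) \<and> (\<forall>x. \<not> E x x)"

definition unit_gain_graph ::
  "'a set \<Rightarrow> ('a \<Rightarrow> 'a \<Rightarrow> bool) \<Rightarrow> ('a \<Rightarrow> 'a \<Rightarrow> complex) \<Rightarrow> bool" where
  "unit_gain_graph V E phi \<longleftrightarrow> simple_graph V E
     \<and> (\<forall>x y. E x y \<longrightarrow> cmod (phi x y) = 1 \<and> phi y x = cnj (phi x y))"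

definition gain_adj ::
  "('a \<Rightarrow> 'a \<Rightarrow> bool) \<Rightarrow> ('a \<Rightarrow> 'a \<Rightarrow> complex) \<Rightarrow> 'a set \<Rightarrow> 'a \<Rightarrow> 'a \<Rightarrow> complex" where
  "gain_adj E phi S i j = (if i \<in> S \<and> j \<in> S \<and> E i j then phi i j else 0)"

definition gain_rank ::
  "('a \<Rightarrow> 'a \<Rightarrow> bool) \<Rightarrow> ('a \<Rightarrow> 'a \<Rightarrow> complex) \<Rightarrow> 'a set \<Rightarrow> nat" where
  "gain_rank E phi S =
     vector_space.dim (\<lambda>(c::complex) (f::'a \<Rightarrow> complex). (\<lambda>x. c * f x))
       ((\<lambda>i. gain_adj E phi S i) ` S)"

definition reach_in :: "('a \<Rightarrow> 'a \<Rightarrow> bool) \<Rightarrow> 'a set \<Rightarrow> 'a \<Rightarrow> 'a \<Rightarrow> bool" where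
  "reach_in E S = (\<lambda>x y. x \<in> S \<and> y \<in> S \<and> E x y)\<^sup>*\<^sup>*"

definition components :: "('a \<Rightarrow> 'a \<Rightarrow> bool) \<Rightarrow> 'a set \<Rightarrow> 'a set set" where
  "components E S = {C. \<exists>x\<in>S. C = {y. reach_in E S x y}}"

definition cut_vertex :: "'a set \<Rightarrow> ('a \<Rightarrow> 'a \<Rightarrow> bool) \<Rightarrow> 'a \<Rightarrow> bool" where
  "cut_vertex V E u \<longleftrightarrow> u \<in> V \<and> card (components E (V - {u})) > card (components E V)"

end

theory Submission
  imports Defs
begin

context vector_space begin

lemma dim_Un_trivial:
  assumes "finite S" "finite T" "span S \<inter> span T \<subseteq> {0}"
  shows "dim (S \<union> T) = dim S + dim T"
proof -
  obtain B where B: "B \<subseteq> S" "independent B" "S \<subseteq> span B" "card B = dim S"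
    using basis_exists by blast
  obtain C where C: "C \<subseteq> T" "independent C" "T \<subseteq> span C" "card C = dim T"
    using basis_exists by blast
  have fin: "finite B" "finite C" using B(1) C(1) assms(1,2) finite_subset by blast+
  have spB: "span B \<subseteq> span S" using B span_mono by auto
  have spC: "span C \<subseteq> span T" using C span_mono by auto
  have disj: "B \<inter> C = {}"
  proof (rule ccontr)
    assume "B \<inter> C \<noteq> {}"
    then obtain x where x: "x \<in> B" "x \<in> C" by auto
    then have "x \<in> span S \<inter> span T" using B C span_base by blast
    then have "x = 0" using assms by auto
    then show False using x B dependent_zero by blast
  qed
  have ind: "independent (B \<union> C)"
  proof (rule independent_if_scalars_zero)
    show "finite (B \<union> C)" using fin by auto
    fix f x assume sum0: "(\<Sum>x\<in>B \<union> C. f x *s x) = 0" and xin: "x \<in> B \<union> C"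
    have "(\<Sum>x\<in>B \<union> C. f x *s x) = (\<Sum>x\<in>B. f x *s x) + (\<Sum>x\<in>C. f x *s x)"
      using fin disj by (simp add: sum.union_disjoint)
    with sum0 have eq: "(\<Sum>x\<in>B. f x *s x) = - (\<Sum>x\<in>C. f x *s x)"
      by (simp add: eq_neg_iff_add_eq_0)
    have "(\<Sum>x\<in>B. f x *s x) \<in> span B"
      by (rule span_sum, rule span_scale, rule span_base) assumption
    then have "(\<Sum>x\<in>B. f x *s x) \<in> span S" using spB by blast
    have "(\<Sum>x\<in>C. f x *s x) \<in> span C"
      by (rule span_sum, rule span_scale, rule span_base) assumption
    then have "- (\<Sum>x\<in>C. f x *s x) \<in> span C" by (rule span_neg)
    then have "- (\<Sum>x\<in>C. f x *s x) \<in> span T" using spC by blast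
    moreover note \<open>(\<Sum>x\<in>B. f x *s x) \<in> span S\<close>
    ultimately have "(\<Sum>x\<in>B. f x *s x) = 0" using eq assms(3) by auto
    moreover then have "(\<Sum>x\<in>C. f x *s x) = 0" using eq by simp
    ultimately show "f x = 0"
      using xin B(2) C(2) fin unfolding independent_explicit_finite_subsets by blast
  qed
  have "dim (S \<union> T) = card (B \<union> C)"
  proof (rule dim_unique)
    show "B \<union> C \<subseteq> S \<union> T" using B C by auto
    show "S \<union> T \<subseteq> span (B \<union> C)"
      using B C span_mono[of B "B \<union> C"] span_mono[of C "B \<union> C"] by auto
  qed (use ind in auto)
  also have "\<dots> = dim S + dim T" using fin disj B C by (simp add: card_Un_disjoint)
  finally show ?thesis .
qed

lemma dim_insert_notin:
  assumes "finite S" "x \<notin> span S"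
  shows "dim (insert x S) = dim S + 1"
proof -
  have x0: "x \<noteq> 0" using assms span_zero by auto
  have "span S \<inter> span {x} \<subseteq> {0}"
  proof
    fix y assume y: "y \<in> span S \<inter> span {x}"
    then obtain k where k: "y = k *s x" using span_breakdown_eq[of y x "{}"] by auto
    show "y \<in> {0}"
    proof (cases "k = 0")
      case True then show ?thesis using k by simp
    next
      case False
      have "inverse k *s y \<in> span S" using y span_scale by auto
      then have "x \<in> span S" using k False by simp
      then show ?thesis using assms by simp
    qed
  qed
  then have "dim (S \<union> {x}) = dim S + dim {x}" using dim_Un_trivial[of S "{x}"] assms by auto
  then have "dim (insert x S) = dim S + dim {x}" by simp
  moreover have "dim {x} = 1"
    using dim_eq_card_independent[of "{x}"] x0 independent_insert[of x "{}"] by auto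
  ultimately show ?thesis by simp
qed

lemma dim_insert_in:
  assumes "x \<in> span S"
  shows "dim (insert x S) = dim S"
  using assms span_redundant span_eq_dim by blast

lemma dim_le_span:
  assumes "finite B" "A \<subseteq> span B"
  shows "dim A \<le> dim B"
proof -
  obtain C where C: "C \<subseteq> B" "independent C" "B \<subseteq> span C" "card C = dim B"
    using basis_exists by blast
  have "A \<subseteq> span C" using assms C span_mono[of B "span C"] span_span by (metis order_trans)
  moreover have "finite C" using C(1) assms(1) finite_subset by blast
  ultimately show ?thesis using dim_le_card[of A C] C by auto
qed

lemma dim_image_le_lin:
  assumes "finite S" "\<And>x y. f (x + y) = f x + f y" "\<And>c x. f (c *s x) = c *s f x"
  shows "dim (f ` S) \<le> dim S"
proof -
  obtain C where C: "C \<subseteq> S" "independent C" "S \<subseteq> span C" "card C = dim S"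
    using basis_exists by blast
  have fC: "finite C" using C(1) assms(1) finite_subset by blast
  have sub: "f ` span C \<subseteq> span (f ` C)"
  proof
    fix y assume "y \<in> f ` span C"
    then obtain x where x: "x \<in> span C" "y = f x" by auto
    from x(1) have "f x \<in> span (f ` C)"
    proof (induction rule: span_induct_alt)
      case base
      have "f 0 = f 0 + f 0" using assms(2)[of 0 0] by simp
      then show ?case by (simp add: span_zero)
    next
      case (step c x y)
      have "c *s f x \<in> span (f ` C)" using step(1) by (intro span_scale span_base) auto
      then show ?case using assms(2,3) step(2) span_add by metis
    qed
    then show "y \<in> span (f ` C)" using x by simp
  qed
  have "dim (f ` S) \<le> card (f ` C)"
    using sub C(3) by (intro dim_le_card) (auto simp: fC)
  also have "\<dots> \<le> card C" using fC card_image_le by auto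
  finally show ?thesis using C by simp
qed

end

interpretation fs: vector_space "\<lambda>(c::complex) (f::'b \<Rightarrow> complex). (\<lambda>x. c * f x)"
  by unfold_locales (auto simp: fun_eq_iff algebra_simps)


lemma span_vanish:
  assumes "f \<in> fs.span S" "\<And>g x. g \<in> S \<Longrightarrow> x \<in> X \<Longrightarrow> g x = 0" "x \<in> X"
  shows "f x = 0"
  using assms(1) by (induction rule: fs.span_induct_alt) (auto simp: assms)

lemma gain_rank_eq: "gain_rank E phi S = fs.dim (gain_adj E phi S ` S)"
  by (simp add: gain_rank_def)

theorem lemma4p1:
  fixes V :: "'a set" and E :: "'a \<Rightarrow> 'a \<Rightarrow> bool" and phi :: "'a \<Rightarrow> 'a \<Rightarrow> complex"
    and u :: 'a and H :: "'a set"
  assumes "unit_gain_graph V E phi"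
    and "cut_vertex V E u"
    and "H \<in> components E (V - {u})"
    and "gain_rank E phi H = gain_rank E phi (H \<union> {u})"
  shows "gain_rank E phi V = gain_rank E phi H + gain_rank E phi (V - H)"
proof -
  have sg: "simple_graph V E" using assms(1) unit_gain_graph_def by auto
  hence finV: "finite V" and EV: "\<And>x y. E x y \<Longrightarrow> x \<in> V \<and> y \<in> V"
    and Esym: "\<And>x y. E x y \<Longrightarrow> E y x" and Eirr: "\<And>x. \<not> E x x"
    by (auto simp: simple_graph_def)
  have uV: "u \<in> V" using assms(2) unfolding cut_vertex_def by blast
  obtain x0 where x0: "x0 \<in> V - {u}" and Hdef: "H = {y. reach_in E (V - {u}) x0 y}"
    using assms(3) unfolding components_def by blast
  have Hsub: "H \<subseteq> V - {u}"
  proof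
    fix y assume "y \<in> H"
    then have "reach_in E (V-{u}) x0 y" using Hdef by auto
    then show "y \<in> V - {u}" using x0 unfolding reach_in_def
      by (induction rule: rtranclp_induct) auto
  qed
  have Hclosed: "j \<in> H \<or> j = u" if hj: "h \<in> H" "E h j" for h j
  proof (cases "j = u")
    case False
    have "reach_in E (V-{u}) x0 h" using hj Hdef by auto
    moreover have "h \<in> V - {u}" "j \<in> V - {u}" using hj Hsub EV False by auto
    ultimately have "reach_in E (V-{u}) x0 j" unfolding reach_in_def
      using hj(2) by (simp add: rtranclp.rtrancl_into_rtrancl)
    then show ?thesis using Hdef by auto
  qed simp
  have uH: "u \<notin> H" using Hsub by auto
  have finH: "finite H" using Hsub finV finite_subset by auto
  define r where "r = gain_adj E phi V"
  define R where "R = V - H - {u}"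
  define U0 where "U0 = r ` H"
  define rho where "rho = gain_adj E phi (H \<union> {u}) u"
  define w where "w = gain_adj E phi (V - H) u"
  define del where "del = (\<lambda>j::'a. if j = u then (1::complex) else 0)"
  define res where "res = (\<lambda>(f::'a \<Rightarrow> complex) j. if j \<in> H then f j else 0)"
  have finR: "finite R" using finV R_def by auto
  have finU0: "finite U0" using finH U0_def by auto
  have rowHu: "gain_adj E phi (H \<union> {u}) h = r h" if "h \<in> H" for h
    using that Hclosed EV Hsub uV unfolding r_def gain_adj_def by (auto simp: fun_eq_iff)
  have rowN: "gain_adj E phi (V - H) k = r k" if "k \<in> R" for k
  proof -
    have "\<not> (j \<in> H)" if "E k j" for j
      using that \<open>k \<in> R\<close> Esym Hclosed unfolding R_def by blast
    then show ?thesis using that EV unfolding r_def gain_adj_def R_def by (auto simp: fun_eq_iff)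
  qed
  have ru: "r u = rho + w"
    using uV uH Eirr EV Hsub unfolding r_def rho_def w_def gain_adj_def by (auto simp: fun_eq_iff)
  have resr: "res (r h) = gain_adj E phi H h" if "h \<in> H" for h
    using that Hsub unfolding r_def res_def gain_adj_def by (auto simp: fun_eq_iff)
  have r_split: "r h = res (r h) + (\<lambda>j. r h u * del j)" if "h \<in> H" for h
    using that Hclosed uH unfolding r_def res_def del_def gain_adj_def by (auto simp: fun_eq_iff)
  have rowsHu: "gain_adj E phi (H \<union> {u}) ` (H \<union> {u}) = insert rho U0"
    using rowHu unfolding U0_def rho_def by auto
  have rowsH: "gain_adj E phi H ` H = res ` U0"
    using resr unfolding U0_def by (auto simp: image_iff)
  have VH: "V - H = insert u R" using uV uH R_def by auto
  have rowsN: "gain_adj E phi (V - H) ` (V - H) = insert w (r ` R)"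
    using rowN unfolding w_def VH by auto
  have VV: "V = insert u (H \<union> R)" using uV Hsub R_def by auto
  have rowsV: "gain_adj E phi V ` V = insert (r u) (U0 \<union> r ` R)"
    unfolding U0_def r_def by (subst VV) auto
  have rkH_le: "gain_rank E phi H \<le> fs.dim U0"
    unfolding gain_rank_eq rowsH
    by (rule fs.dim_image_le_lin) (auto simp: finU0 res_def fun_eq_iff)
  have rkHu: "gain_rank E phi (H \<union> {u}) = fs.dim (insert rho U0)"
    unfolding gain_rank_eq rowsHu ..
  have rho_in: "rho \<in> fs.span U0"
  proof (rule ccontr)
    assume "rho \<notin> fs.span U0"
    then have "fs.dim (insert rho U0) = fs.dim U0 + 1" using fs.dim_insert_notin finU0 by blast
    then show False using rkH_le rkHu assms(4) by simp
  qed
  have dimU0: "fs.dim U0 = gain_rank E phi H"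
    using rkH_le rkHu assms(4) fs.dim_insert_in[OF rho_in] by simp
  have del_notin: "del \<notin> fs.span U0"
  proof
    assume d: "del \<in> fs.span U0"
    have sub: "insert del (res ` U0) \<subseteq> fs.span U0"
    proof -
      have "res (r h) \<in> fs.span U0" if "h \<in> H" for h
      proof -
        have "r h \<in> fs.span U0" using that U0_def fs.span_base by blast
        moreover have "(\<lambda>j. r h u * del j) \<in> fs.span U0" using fs.span_scale[OF d] by simp
        ultimately have "r h - (\<lambda>j. r h u * del j) \<in> fs.span U0" by (rule fs.span_diff)
        moreover have "r h - (\<lambda>j. r h u * del j) = res (r h)"
          using r_split[OF that] by (metis add_diff_cancel)
        ultimately show ?thesis by simp
      qed
      then show ?thesis using d U0_def by auto
    qed
    have "del \<notin> fs.span (res ` U0)"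
    proof
      assume "del \<in> fs.span (res ` U0)"
      then have "del u = 0" by (rule span_vanish[where X="{u}"]) (auto simp: res_def uH)
      then show False by (simp add: del_def)
    qed
    then have "fs.dim (insert del (res ` U0)) = fs.dim (res ` U0) + 1"
      using fs.dim_insert_notin[OF finite_imageI[OF finU0]] by blast
    moreover have "fs.dim (insert del (res ` U0)) \<le> fs.dim U0"
      using fs.dim_le_span[OF finU0 sub] .
    moreover have "fs.dim (res ` U0) = gain_rank E phi H" using rowsH gain_rank_eq by metis
    ultimately show False using dimU0 by simp
  qed
  have inter: "fs.span U0 \<inter> fs.span (insert w (r ` R)) \<subseteq> {0}"
  proof
    fix f assume f: "f \<in> fs.span U0 \<inter> fs.span (insert w (r ` R))"
    have vanH: "f j = 0" if "j \<in> H" for j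
    proof (rule span_vanish[where X=H])
      show "f \<in> fs.span (insert w (r ` R))" using f by auto
      show "g x = 0" if "g \<in> insert w (r ` R)" "x \<in> H" for g x
      proof -
        have "\<not> E k x" if "k \<in> R" for k
          using that \<open>x \<in> H\<close> Esym Hclosed unfolding R_def by blast
        then show ?thesis using that unfolding w_def r_def gain_adj_def by auto
      qed
    qed (rule that)
    have vanO: "f j = 0" if "j \<notin> H" "j \<noteq> u" for j
    proof (rule span_vanish[where X="- (H \<union> {u})"])
      show "f \<in> fs.span U0" using f by auto
      show "g x = 0" if gU: "g \<in> U0" and xO: "x \<in> - (H \<union> {u})" for g x
      proof -
        obtain h where h: "h \<in> H" "g = r h" using gU unfolding U0_def by blast
        have "\<not> E h x" using Hclosed[OF h(1)] xO by blast
        then show ?thesis unfolding h(2) r_def gain_adj_def by simp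
      qed
    qed (use that in auto)
    show "f \<in> {0}"
    proof (cases "f u = 0")
      case True
      have "f = 0"
      proof (rule ext)
        fix j show "f j = 0 j" using vanH vanO True by (cases "j = u") auto
      qed
      then show ?thesis by simp
    next
      case False
      have "(\<lambda>j. inverse (f u) * f j) \<in> fs.span U0" using f fs.span_scale by auto
      moreover have "(\<lambda>j. inverse (f u) * f j) = del"
      proof (rule ext)
        fix j show "inverse (f u) * f j = del j"
          using vanH vanO False unfolding del_def by (cases "j = u") auto
      qed
      ultimately show ?thesis using del_notin by simp
    qed
  qed
  have spanV: "fs.span (insert (r u) (U0 \<union> r ` R)) = fs.span (U0 \<union> insert w (r ` R))"
  proof -
    let ?A = "insert (r u) (U0 \<union> r ` R)"
    let ?B = "U0 \<union> insert w (r ` R)"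
    have supA: "?A \<subseteq> fs.span ?A" by (rule fs.span_superset)
    have supB: "?B \<subseteq> fs.span ?B" by (rule fs.span_superset)
    have U0A: "fs.span U0 \<subseteq> fs.span ?A" by (rule fs.span_mono) blast
    have U0B: "fs.span U0 \<subseteq> fs.span ?B" by (rule fs.span_mono) blast
    have wB: "w \<in> fs.span ?B" using supB by blast
    have "rho + w \<in> fs.span ?B" using fs.span_add[OF subsetD[OF U0B rho_in] wB] .
    then have ruB: "r u \<in> fs.span ?B" by (simp only: ru)
    have ruA: "r u \<in> fs.span ?A" using supA by blast
    have "r u - rho \<in> fs.span ?A" using fs.span_diff[OF ruA subsetD[OF U0A rho_in]] .
    moreover have "r u - rho = w" by (simp only: ru add_diff_cancel_left')
    ultimately have wA: "w \<in> fs.span ?A" by (simp only:)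
    have "?A \<subseteq> fs.span ?B" using ruB supB by blast
    moreover have "?B \<subseteq> fs.span ?A" using wA supA by blast
    ultimately show ?thesis using fs.span_eq by blast
  qed
  have "gain_rank E phi V = fs.dim (U0 \<union> insert w (r ` R))"
    unfolding gain_rank_eq rowsV using fs.span_eq_dim[OF spanV] .
  also have "\<dots> = fs.dim U0 + fs.dim (insert w (r ` R))"
    using fs.dim_Un_trivial[OF finU0 _ inter] finR by simp
  also have "\<dots> = gain_rank E phi H + gain_rank E phi (V - H)"
    unfolding dimU0 gain_rank_eq rowsN ..
  finally show ?thesis .
qed

end
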